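(* Let $A\in\mathcal{C}^{\mathrm{clq}}$ be such that the associated geometry $\mathbf{A}:=\mathcal{G}(A)$ is $(n-1)$-pure. Then $\mathbf{A}^{\mathrm{geo}}\in\mathcal{C}^{\mathrm{geo}}$.
   Context: Fix a natural number $n$ and a symmetric irreflexive $n$-ary relation symbol $S$; substructures are induced. For an $\{S\}$-structure $A$, $K\subseteq A$ with $|K|\ge n$ is a clique if all $n$-element subsets of $K$ (as tuples of distinct elements) lie in $S^A$; maximal cliques are those not properly contained in another clique; $\mathcal{M}(A)$ is the set of maximal cliques. For finite $X$, $|X|_*=\max\{0,|X|-(n-1)\}$; for finite $A$, $\delta_s(A)=|A|-\sum_{K\in\mathcal{M}(A)}|K|_*$; for finite $B\subseteq A$, $\delta_s(A/B)=\delta_s(A)-\delta_s(B)$; $B\le A$ means $\delta_s(X/B)\ge0$ for all finite $X$ with $B\subseteq X\subseteq A$. $\mathcal{C}^{\mathrm{clq}}_0$ is the class of finite $\{S\}$-structures in which distinct maximal cliques intersect in fewer than $n$ points; $\mathcal{C}^{\mathrm{clq}}$ is the class of $A\in\mathcal{C}^{\mathrm{clq}}_0$ with $\{a\}\le A$ for all $a\in A$. For an $\{S\}$-structure $A$ with $\{a\}\le A$ for all $a\in A$, the associated geometry $\mathcal{G}(A)$ is the geometry (finitary matroid with $\mathrm{cl}(\emptyset)=\emptyset$ and singletons closed) on the universe of $A$ whose dimension function is $d(X)=\inf\{\delta_s(Y):X\subseteq Y\subseteq A,\ Y\text{ finite}\}$ for finite $X$. A geometry is $m$-pure if $m$ is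 the maximal natural number such that every $m$-element subset is independent. For a geometry $\mathbf{A}$ on $A$, $\mathbf{A}^{\mathrm{geo}}$ is the $\{S\}$-structure on $A$ whose maximal cliques are exactly the sets $\mathrm{cl}_{\mathbf{A}}(C)$ with $C\in[A]^{n-1}$ and $\mathrm{cl}_{\mathbf{A}}(C)\ne C$. An $\{S\}$-structure $A$ is geometric if whenever $X\subseteq A$, $|X|\ge n$ and $\delta_s(X)<n$, there is a unique $K\in\mathcal{M}(A)$ with $X\subseteq K$; $\mathcal{C}^{\mathrm{geo}}$ is the class of finite geometric $\{S\}$-structures. *)

theory Defs
  imports Main
begin

text \<open>An {S}-structure with universe A, S a symmetric irreflexive n-ary relation,
  is represented by the set S of n-element subsets {a1,...,an} such that
  (a1,...,an) lies in S (symmetry + irreflexivity make this a faithful encoding).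
  Substructures are induced: the substructure on X just uses the members of S
  contained in X.\<close>

definition is_structure :: "nat \<Rightarrow> 'a set \<Rightarrow> 'a set set \<Rightarrow> bool" where
  "is_structure n A S \<longleftrightarrow> (\<forall>Y\<in>S. Y \<subseteq> A \<and> finite Y \<and> card Y = n)"

definition clique :: "nat \<Rightarrow> 'a set set \<Rightarrow> 'a set \<Rightarrow> 'a set \<Rightarrow> bool" where
  "clique n S X K \<longleftrightarrow> K \<subseteq> X \<and> (infinite K \<or> n \<le> card K) \<and>
     (\<forall>Y. Y \<subseteq> K \<and> finite Y \<and> card Y = n \<longrightarrow> Y \<in> S)"

definition maxcliques :: "nat \<Rightarrow> 'a set set \<Rightarrow> 'a set \<Rightarrow> 'a set set" where
  "maxcliques n S X = {K. clique n S X K \<and> (\<forall>K'. clique n S X K' \<and> K \<subseteq> K' \<longrightarrow> K' = K)}"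

text \<open>|X|_* = max 0 (|X| - (n-1)) (truncated subtraction on nat).\<close>
definition starcard :: "nat \<Rightarrow> 'a set \<Rightarrow> nat" where
  "starcard n X = card X - (n - 1)"

definition delta :: "nat \<Rightarrow> 'a set set \<Rightarrow> 'a set \<Rightarrow> int" where
  "delta n S X = int (card X) - (\<Sum>K\<in>maxcliques n S X. int (starcard n K))"

definition strong :: "nat \<Rightarrow> 'a set set \<Rightarrow> 'a set \<Rightarrow> 'a set \<Rightarrow> bool" where
  "strong n S B A \<longleftrightarrow> (\<forall>X. finite X \<and> B \<subseteq> X \<and> X \<subseteq> A \<longrightarrow> delta n S X - delta n S B \<ge> 0)"

definition C_clq0 :: "nat \<Rightarrow> 'a set \<Rightarrow> 'a set set \<Rightarrow> bool" where
  "C_clq0 n A S \<longleftrightarrow> finite A \<and> is_structure n A S \<and>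
     (\<forall>K1\<in>maxcliques n S A. \<forall>K2\<in>maxcliques n S A. K1 \<noteq> K2 \<longrightarrow> card (K1 \<inter> K2) < n)"

definition C_clq :: "nat \<Rightarrow> 'a set \<Rightarrow> 'a set set \<Rightarrow> bool" where
  "C_clq n A S \<longleftrightarrow> C_clq0 n A S \<and> (\<forall>a\<in>A. strong n S {a} A)"

definition gdim :: "nat \<Rightarrow> 'a set set \<Rightarrow> 'a set \<Rightarrow> 'a set \<Rightarrow> int" where
  "gdim n S A X = Inf {delta n S Y | Y. finite Y \<and> X \<subseteq> Y \<and> Y \<subseteq> A}"

definition gindep :: "nat \<Rightarrow> 'a set set \<Rightarrow> 'a set \<Rightarrow> 'a set \<Rightarrow> bool" where
  "gindep n S A X \<longleftrightarrow> X \<subseteq> A \<and> finite X \<and> gdim n S A X = int (card X)"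

definition gcl :: "nat \<Rightarrow> 'a set set \<Rightarrow> 'a set \<Rightarrow> 'a set \<Rightarrow> 'a set" where
  "gcl n S A X = {a\<in>A. gdim n S A (insert a X) = gdim n S A X}"

text \<open>m-pure: m is the largest natural number (among those for which m-element
  subsets exist, i.e. m \<le> |A|) such that every m-element subset is independent.\<close>
definition gpure :: "nat \<Rightarrow> 'a set set \<Rightarrow> 'a set \<Rightarrow> nat \<Rightarrow> bool" where
  "gpure n S A m \<longleftrightarrow> m \<le> card A \<and>
     (\<forall>X. X \<subseteq> A \<and> card X = m \<longrightarrow> gindep n S A X) \<and>
     (\<forall>k. k \<le> card A \<and> (\<forall>X. X \<subseteq> A \<and> card X = k \<longrightarrow> gindep n S A X) \<longrightarrow> k \<le> m)"

definition geo_rel :: "nat \<Rightarrow> 'a set set \<Rightarrow> 'a set \<Rightarrow> 'a set set" where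
  "geo_rel n S A = {Y. Y \<subseteq> A \<and> finite Y \<and> card Y = n \<and>
     (\<exists>C. C \<subseteq> A \<and> finite C \<and> card C = n - 1 \<and> gcl n S A C \<noteq> C \<and> Y \<subseteq> gcl n S A C)}"

definition geometric :: "nat \<Rightarrow> 'a set \<Rightarrow> 'a set set \<Rightarrow> bool" where
  "geometric n A S \<longleftrightarrow> (\<forall>X. X \<subseteq> A \<and> finite X \<and> n \<le> card X \<and> delta n S X < int n \<longrightarrow>
     (\<exists>!K. K \<in> maxcliques n S A \<and> X \<subseteq> K))"

definition C_geo :: "nat \<Rightarrow> 'a set \<Rightarrow> 'a set set \<Rightarrow> bool" where
  "C_geo n A S \<longleftrightarrow> finite A \<and> is_structure n A S \<and> geometric n A S"

end

theory Submission
  imports Defs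
begin

locale lin =
  fixes n :: nat and R :: "'a set set" and A :: "'a set"
  assumes finA: "finite A" and n1: "1 \<le> n"
    and str: "is_structure n A R"
    and inter: "\<forall>K1\<in>maxcliques n R A. \<forall>K2\<in>maxcliques n R A. K1 \<noteq> K2 \<longrightarrow> card (K1 \<inter> K2) < n"
begin

lemma clique_sub: "clique n R X K \<Longrightarrow> K \<subseteq> X"
  by (simp add: clique_def)

lemma clique_A: "X \<subseteq> A \<Longrightarrow> clique n R X K \<Longrightarrow> clique n R A K"
  unfolding clique_def by blast

lemma clique_X: "clique n R A K \<Longrightarrow> K \<subseteq> X \<Longrightarrow> clique n R X K"
  unfolding clique_def by blast

lemma clique_fin: "clique n R A K \<Longrightarrow> finite K"
  unfolding clique_def using finA finite_subset by blast

lemma clique_card: "clique n R A K \<Longrightarrow> n \<le> card K"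
  unfolding clique_def using clique_fin[unfolded clique_def] by blast

lemma clique_subset: "clique n R A K \<Longrightarrow> K' \<subseteq> K \<Longrightarrow> n \<le> card K' \<Longrightarrow> clique n R A K'"
  unfolding clique_def by blast

lemma finM: "finite (maxcliques n R A)"
proof -
  have "maxcliques n R A \<subseteq> Pow A" unfolding maxcliques_def clique_def by auto
  then show ?thesis using finA finite_subset by blast
qed

lemma in_max: assumes "clique n R A K" shows "\<exists>K'\<in>maxcliques n R A. K \<subseteq> K'"
proof -
  let ?F = "{K'. clique n R A K' \<and> K \<subseteq> K'}"
  have "?F \<subseteq> Pow A" unfolding clique_def by auto
  hence fF: "finite ?F" using finA finite_subset by blast
  have "?F \<noteq> {}" using assms by auto
  then obtain m where m: "m \<in> ?F" "\<forall>b\<in>?F. m \<le> b \<longrightarrow> m = b"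
    using finite_has_maximal[OF fF] by blast
  have "m \<in> maxcliques n R A" unfolding maxcliques_def using m by auto
  then show ?thesis using m by auto
qed

lemma max_clique: "K \<in> maxcliques n R A \<Longrightarrow> clique n R A K"
  by (simp add: maxcliques_def)

lemma max_inter_eq: "K1 \<in> maxcliques n R A \<Longrightarrow> K2 \<in> maxcliques n R A \<Longrightarrow> n \<le> card (K1 \<inter> K2) \<Longrightarrow> K1 = K2"
  using inter by force

lemma maxX: assumes X: "X \<subseteq> A"
  shows "maxcliques n R X = (\<lambda>K. K \<inter> X) ` {K \<in> maxcliques n R A. n \<le> card (K \<inter> X)}"
proof
  show "maxcliques n R X \<subseteq> (\<lambda>K. K \<inter> X) ` {K \<in> maxcliques n R A. n \<le> card (K \<inter> X)}"
  proof
    fix Q assume Q: "Q \<in> maxcliques n R X"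
    hence cQ: "clique n R X Q" and mQ: "\<forall>K'. clique n R X K' \<and> Q \<subseteq> K' \<longrightarrow> K' = Q"
      by (auto simp: maxcliques_def)
    have cQA: "clique n R A Q" using clique_A[OF X cQ] .
    then obtain K where K: "K \<in> maxcliques n R A" "Q \<subseteq> K" using in_max by blast
    have QX: "Q \<subseteq> X" using cQ clique_sub by blast
    have fK: "finite K" using clique_fin max_clique K(1) by blast
    have "card Q \<le> card (K \<inter> X)" using QX K(2) fK by (intro card_mono) auto
    hence cn: "n \<le> card (K \<inter> X)" using clique_card[OF cQA] by linarith
    have "clique n R A (K \<inter> X)" using clique_subset[OF max_clique[OF K(1)] _ cn] by blast
    hence "clique n R X (K \<inter> X)" using clique_X by blast
    hence "K \<inter> X = Q" using mQ QX K(2) by blast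
    then show "Q \<in> (\<lambda>K. K \<inter> X) ` {K \<in> maxcliques n R A. n \<le> card (K \<inter> X)}"
      using K(1) cn by blast
  qed
next
  show "(\<lambda>K. K \<inter> X) ` {K \<in> maxcliques n R A. n \<le> card (K \<inter> X)} \<subseteq> maxcliques n R X"
  proof
    fix Q assume "Q \<in> (\<lambda>K. K \<inter> X) ` {K \<in> maxcliques n R A. n \<le> card (K \<inter> X)}"
    then obtain K where K: "K \<in> maxcliques n R A" "n \<le> card (K \<inter> X)" "Q = K \<inter> X" by blast
    have fK: "finite K" using clique_fin max_clique K(1) by blast
    have cQ: "clique n R X Q" using clique_X[OF clique_subset[OF max_clique[OF K(1)] _ K(2)]] K(3) by blast
    have "K' = Q" if "clique n R X K'" "Q \<subseteq> K'" for K'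
    proof -
      have cA: "clique n R A K'" using clique_A[OF X that(1)] .
      then obtain K'' where K'': "K'' \<in> maxcliques n R A" "K' \<subseteq> K''" using in_max by blast
      have "card (K \<inter> X) \<le> card (K'' \<inter> K)" using fK K'' that(2) K(3) by (intro card_mono) auto
      hence "K'' = K" using max_inter_eq[OF K'' (1) K(1)] K(2) by linarith
      then show ?thesis using K'' that clique_sub K(3) by blast
    qed
    then show "Q \<in> maxcliques n R X" unfolding maxcliques_def using cQ by blast
  qed
qed

lemma delta_formula: assumes X: "X \<subseteq> A"
  shows "delta n R X = int (card X) - (\<Sum>K\<in>maxcliques n R A. int (starcard n (K \<inter> X)))"
proof -
  let ?M = "{K \<in> maxcliques n R A. n \<le> card (K \<inter> X)}"
  have inj: "inj_on (\<lambda>K. K \<inter> X) ?M"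
  proof (rule inj_onI)
    fix K1 K2 assume a: "K1 \<in> ?M" "K2 \<in> ?M" "K1 \<inter> X = K2 \<inter> X"
    have "K1 \<inter> X \<subseteq> K1 \<inter> K2" using a(3) by blast
    moreover have "finite K1" using clique_fin max_clique a(1) by blast
    ultimately have "card (K1 \<inter> X) \<le> card (K1 \<inter> K2)" by (intro card_mono) auto
    then show "K1 = K2" using max_inter_eq a by force
  qed
  have "(\<Sum>Q\<in>maxcliques n R X. int (starcard n Q)) = (\<Sum>K\<in>?M. int (starcard n (K \<inter> X)))"
    unfolding maxX[OF X] by (subst sum.reindex[OF inj]) auto
  also have "\<dots> = (\<Sum>K\<in>maxcliques n R A. int (starcard n (K \<inter> X)))"
  proof (rule sum.mono_neutral_left[OF finM])
    show "?M \<subseteq> maxcliques n R A" by blast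
    show "\<forall>i\<in>maxcliques n R A - ?M. int (starcard n (i \<inter> X)) = 0"
      by (auto simp: starcard_def)
  qed
  finally show ?thesis unfolding delta_def by simp
qed


lemma delta_le_card: "X \<subseteq> A \<Longrightarrow> delta n R X \<le> int (card X)"
  unfolding delta_formula by (simp add: sum_nonneg)

lemma sc_ineq:
  fixes u p a b m :: nat
  assumes "u + p = a + b" "p \<le> a" "p \<le> b" "a \<le> u" "b \<le> u"
  shows "int (a - m) + int (b - m) \<le> int (u - m) + int (p - m)"
  using assms by auto

lemma delta_submod: assumes "X \<subseteq> A" "Y \<subseteq> A"
  shows "delta n R (X \<union> Y) + delta n R (X \<inter> Y) \<le> delta n R X + delta n R Y"
proof -
  have fX: "finite X" "finite Y" using assms finA finite_subset by auto
  have c: "card (X \<union> Y) + card (X \<inter> Y) = card X + card Y" using card_Un_Int fX by metis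
  have k: "int (starcard n (K \<inter> X)) + int (starcard n (K \<inter> Y))
      \<le> int (starcard n (K \<inter> (X \<union> Y))) + int (starcard n (K \<inter> (X \<inter> Y)))" if "K \<in> maxcliques n R A" for K
  proof -
    have fK: "finite K" using clique_fin max_clique that by blast
    have e1: "K \<inter> (X \<union> Y) = (K \<inter> X) \<union> (K \<inter> Y)" "K \<inter> (X \<inter> Y) = (K \<inter> X) \<inter> (K \<inter> Y)" by auto
    have "card (K \<inter> (X \<union> Y)) + card (K \<inter> (X \<inter> Y)) = card (K \<inter> X) + card (K \<inter> Y)"
      unfolding e1 using card_Un_Int fK by (metis finite_Int)
    moreover have "card (K \<inter> (X \<inter> Y)) \<le> card (K \<inter> X)" "card (K \<inter> (X \<inter> Y)) \<le> card (K \<inter> Y)"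
      "card (K \<inter> X) \<le> card (K \<inter> (X \<union> Y))" "card (K \<inter> Y) \<le> card (K \<inter> (X \<union> Y))"
      using fK by (auto intro!: card_mono)
    ultimately show ?thesis unfolding starcard_def by (intro sc_ineq) auto
  qed
  have "(\<Sum>K\<in>maxcliques n R A. int (starcard n (K \<inter> X))) + (\<Sum>K\<in>maxcliques n R A. int (starcard n (K \<inter> Y)))
     \<le> (\<Sum>K\<in>maxcliques n R A. int (starcard n (K \<inter> (X \<union> Y)))) + (\<Sum>K\<in>maxcliques n R A. int (starcard n (K \<inter> (X \<inter> Y))))"
    unfolding sum.distrib[symmetric] by (rule sum_mono) (rule k)
  then show ?thesis using assms c by (simp add: delta_formula Int_Un_distrib2 le_infI1)
qed

lemma clique_delta: assumes "clique n R A Q" shows "delta n R Q = int n - 1"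
proof -
  have cQ: "clique n R Q Q" using assms clique_X by blast
  have "maxcliques n R Q = {Q}"
  proof -
    have "K = Q" if "K \<in> maxcliques n R Q" for K
      using that cQ clique_sub unfolding maxcliques_def by blast
    moreover have "Q \<in> maxcliques n R Q" using cQ clique_sub unfolding maxcliques_def by blast
    ultimately show ?thesis by blast
  qed
  then show ?thesis using clique_card[OF assms] n1 unfolding delta_def starcard_def by simp
qed
end

locale clqs = lin n S A for n S A +
  assumes pure: "\<And>C. C \<subseteq> A \<Longrightarrow> card C = n - 1 \<Longrightarrow> gdim n S A C = int (n - 1)"
begin

abbreviation dd where "dd X \<equiv> gdim n S A X"
abbreviation dl where "dl X \<equiv> delta n S X"

lemma gdim_set: assumes "X \<subseteq> A"
  shows "gdim n S A X = Min ((\<lambda>Y. delta n S Y) ` {Y. X \<subseteq> Y \<and> Y \<subseteq> A})"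
    and "finite ((\<lambda>Y. delta n S Y) ` {Y. X \<subseteq> Y \<and> Y \<subseteq> A})"
    and "(\<lambda>Y. delta n S Y) ` {Y. X \<subseteq> Y \<and> Y \<subseteq> A} \<noteq> {}"
proof -
  have e: "{delta n S Y | Y. finite Y \<and> X \<subseteq> Y \<and> Y \<subseteq> A} = (\<lambda>Y. delta n S Y) ` {Y. X \<subseteq> Y \<and> Y \<subseteq> A}"
    using finA finite_subset by blast
  have "{Y. X \<subseteq> Y \<and> Y \<subseteq> A} \<subseteq> Pow A" by auto
  hence "finite {Y. X \<subseteq> Y \<and> Y \<subseteq> A}" using finA by (simp add: finite_subset)
  then show f: "finite ((\<lambda>Y. delta n S Y) ` {Y. X \<subseteq> Y \<and> Y \<subseteq> A})" by (rule finite_imageI)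
  show ne: "(\<lambda>Y. delta n S Y) ` {Y. X \<subseteq> Y \<and> Y \<subseteq> A} \<noteq> {}" using assms by blast
  show "gdim n S A X = Min ((\<lambda>Y. delta n S Y) ` {Y. X \<subseteq> Y \<and> Y \<subseteq> A})"
    unfolding gdim_def e by (rule cInf_eq_Min[OF f ne])
qed

lemma gdim_le: "X \<subseteq> Y \<Longrightarrow> Y \<subseteq> A \<Longrightarrow> dd X \<le> dl Y"
  using gdim_set[of X] by (auto intro!: Min_le)

lemma gdim_wit: assumes "X \<subseteq> A" shows "\<exists>Y. X \<subseteq> Y \<and> Y \<subseteq> A \<and> dl Y = dd X"
proof -
  have "dd X \<in> (\<lambda>Y. delta n S Y) ` {Y. X \<subseteq> Y \<and> Y \<subseteq> A}"
    unfolding gdim_set(1)[OF assms] using gdim_set(2,3)[OF assms] by (rule Min_in)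
  then show ?thesis by auto
qed

lemma gdim_mono: assumes "X \<subseteq> X'" "X' \<subseteq> A" shows "dd X \<le> dd X'"
proof -
  obtain Y where Y: "X' \<subseteq> Y" "Y \<subseteq> A" "dl Y = dd X'" using gdim_wit[OF assms(2)] by blast
  have "dd X \<le> dl Y" using Y assms by (intro gdim_le) auto
  then show ?thesis using Y by simp
qed

lemma gdim_card: assumes "X \<subseteq> A" shows "dd X \<le> int (card X)"
proof -
  have "dd X \<le> dl X" using gdim_le[OF _ assms] by blast
  then show ?thesis using delta_le_card[OF assms] by linarith
qed

lemma gdim_submod: assumes "X \<subseteq> A" "Y \<subseteq> A"
  shows "dd (X \<union> Y) + dd (X \<inter> Y) \<le> dd X + dd Y"
proof -
  obtain X' where X': "X \<subseteq> X'" "X' \<subseteq> A" "dl X' = dd X" using gdim_wit[OF assms(1)] by blast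
  obtain Y' where Y': "Y \<subseteq> Y'" "Y' \<subseteq> A" "dl Y' = dd Y" using gdim_wit[OF assms(2)] by blast
  have "dd (X \<union> Y) \<le> dl (X' \<union> Y')" using X' Y' by (intro gdim_le) auto
  moreover have "dd (X \<inter> Y) \<le> dl (X' \<inter> Y')" using X' Y' by (intro gdim_le) auto
  moreover have "dl (X' \<union> Y') + dl (X' \<inter> Y') \<le> dl X' + dl Y'" using X' Y' delta_submod by blast
  ultimately show ?thesis using X' Y' by linarith
qed

lemma gdim_big: "D \<subseteq> X \<Longrightarrow> X \<subseteq> A \<Longrightarrow> card D = n - 1 \<Longrightarrow> int (n - 1) \<le> dd X"
  using gdim_mono[of D X] pure[of D] by auto

definition Lines where
  "Lines = {gcl n S A C | C. C \<subseteq> A \<and> card C = n - 1 \<and> gcl n S A C \<noteq> C}"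

lemma cl_sub: "gcl n S A C \<subseteq> A" unfolding gcl_def by auto

lemma C_cl: "C \<subseteq> A \<Longrightarrow> C \<subseteq> gcl n S A C" unfolding gcl_def by (auto simp: insert_absorb)

lemma cl_mem: assumes "C \<subseteq> A" "card C = n - 1" "a \<in> A" "dd (insert a C) \<le> int (n - 1)"
  shows "a \<in> gcl n S A C"
proof -
  have "dd C \<le> dd (insert a C)" using assms by (intro gdim_mono) auto
  then show ?thesis using assms pure[of C] unfolding gcl_def by auto
qed

lemma cl_memD: assumes "C \<subseteq> A" "card C = n - 1" "a \<in> gcl n S A C"
  shows "dd (insert a C) = int (n - 1)"
  using assms pure[of C] unfolding gcl_def by auto

lemma gdim_union_cl: assumes "finite T" "T \<subseteq> A" "C \<subseteq> A" "\<forall>a\<in>T. dd (insert a C) = dd C"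
  shows "dd (C \<union> T) = dd C"
  using assms
proof (induction T rule: finite_induct)
  case empty then show ?case by simp
next
  case (insert a T)
  have IH: "dd (C \<union> T) = dd C" using insert by auto
  have aA: "a \<in> A" using insert by auto
  have sm: "dd ((C \<union> T) \<union> insert a C) + dd ((C \<union> T) \<inter> insert a C) \<le> dd (C \<union> T) + dd (insert a C)"
    using insert by (intro gdim_submod) auto
  have "(C \<union> T) \<inter> insert a C = C \<or> (C \<union> T) \<inter> insert a C = insert a C" by auto
  hence "dd ((C \<union> T) \<inter> insert a C) = dd C" using insert by auto
  moreover have "(C \<union> T) \<union> insert a C = C \<union> insert a T" by auto
  ultimately have "dd (C \<union> insert a T) \<le> dd C" using sm IH insert by auto
  moreover have "dd C \<le> dd (C \<union> insert a T)" using insert by (intro gdim_mono) auto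
  ultimately show ?case by linarith
qed

lemma gdim_cl: assumes "C \<subseteq> A" "card C = n - 1" shows "dd (gcl n S A C) = int (n - 1)"
proof -
  have f: "finite (gcl n S A C)" using cl_sub finA finite_subset by blast
  have "dd (C \<union> gcl n S A C) = dd C"
    using gdim_union_cl[OF f cl_sub assms(1)] unfolding gcl_def by auto
  moreover have "C \<union> gcl n S A C = gcl n S A C" using C_cl[OF assms(1)] by auto
  ultimately show ?thesis using pure[OF assms] by simp
qed

lemma absorb: assumes C: "C \<subseteq> A" "card C = n - 1" and V: "V \<subseteq> A" "dd V \<le> int (n - 1)"
  and D: "D \<subseteq> V \<inter> gcl n S A C" "card D = n - 1"
  shows "V \<subseteq> gcl n S A C"
proof
  fix a assume aV: "a \<in> V"
  let ?L = "gcl n S A C"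
  have sm: "dd (?L \<union> V) + dd (?L \<inter> V) \<le> dd ?L + dd V" using gdim_submod cl_sub V by blast
  have "int (n - 1) \<le> dd (?L \<inter> V)" using gdim_big[of D "?L \<inter> V"] D cl_sub by blast
  hence le: "dd (?L \<union> V) \<le> int (n - 1)" using sm gdim_cl[OF C] V by linarith
  have "dd (insert a C) \<le> dd (?L \<union> V)" using aV C_cl[OF C(1)] cl_sub V by (intro gdim_mono) auto
  then show "a \<in> ?L" using cl_mem[OF C] aV V le by auto
qed

lemma LinesE: assumes "L \<in> Lines"
  obtains C where "C \<subseteq> A" "card C = n - 1" "L = gcl n S A C" "gcl n S A C \<noteq> C"
  using assms unfolding Lines_def by blast

lemma line_A: "L \<in> Lines \<Longrightarrow> L \<subseteq> A" using cl_sub unfolding Lines_def by blast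

lemma line_fin: "L \<in> Lines \<Longrightarrow> finite L" using line_A finA finite_subset by blast

lemma line_dim: "L \<in> Lines \<Longrightarrow> dd L = int (n - 1)" using gdim_cl unfolding Lines_def by blast

lemma line_card: assumes "L \<in> Lines" shows "n \<le> card L"
proof -
  obtain C where C: "C \<subseteq> A" "card C = n - 1" "L = gcl n S A C" "gcl n S A C \<noteq> C"
    using LinesE[OF assms] by blast
  have "C \<subset> L" using C C_cl by auto
  hence "card C < card L" using line_fin[OF assms] psubset_card_mono by blast
  then show ?thesis using C n1 by linarith
qed

lemma line_eq: assumes "L1 \<in> Lines" "L2 \<in> Lines" "D \<subseteq> L1 \<inter> L2" "card D = n - 1"
  shows "L1 = L2"
proof -
  obtain C1 where C1: "C1 \<subseteq> A" "card C1 = n - 1" "L1 = gcl n S A C1" using LinesE[OF assms(1)] by blast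
  obtain C2 where C2: "C2 \<subseteq> A" "card C2 = n - 1" "L2 = gcl n S A C2" using LinesE[OF assms(2)] by blast
  have "L2 \<subseteq> L1" using absorb[OF C1(1,2) line_A[OF assms(2)] _ _ assms(4)] C1(3) assms(3) line_dim[OF assms(2)] by auto
  moreover have "L1 \<subseteq> L2" using absorb[OF C2(1,2) line_A[OF assms(1)] _ _ assms(4)] C2(3) assms(3) line_dim[OF assms(1)] by auto
  ultimately show ?thesis by blast
qed

lemma line_eq2: assumes "L1 \<in> Lines" "L2 \<in> Lines" "X \<subseteq> L1 \<inter> L2" "n - 1 \<le> card X"
  shows "L1 = L2"
proof -
  obtain D where "D \<subseteq> X" "card D = n - 1" using obtain_subset_with_card_n[OF assms(4)] by blast
  then show ?thesis using line_eq assms by blast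
qed

lemma line_delta: assumes "L \<in> Lines" shows "dl L = int (n - 1)"
proof -
  obtain C where C: "C \<subseteq> A" "card C = n - 1" "L = gcl n S A C" using LinesE[OF assms] by blast
  obtain Y where Y: "L \<subseteq> Y" "Y \<subseteq> A" "dl Y = dd L" using gdim_wit[OF line_A[OF assms]] by blast
  have "dd Y \<le> dl Y" using gdim_le[OF _ Y(2)] by blast
  hence le: "dd Y \<le> int (n - 1)" using Y line_dim[OF assms] by simp
  have "C \<subseteq> Y \<inter> gcl n S A C" using C Y C_cl[OF C(1)] by auto
  hence "Y \<subseteq> L" using absorb[OF C(1,2) Y(2) le _ C(2)] C(3) by blast
  then show ?thesis using Y line_dim[OF assms] by auto
qed

lemma in_line: assumes "Q \<subseteq> A" "n \<le> card Q" "C \<subseteq> Q" "card C = n - 1"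
  and "\<forall>a\<in>Q. dd (insert a C) \<le> int (n - 1)"
  shows "gcl n S A C \<in> Lines \<and> Q \<subseteq> gcl n S A C"
proof -
  have CA: "C \<subseteq> A" using assms by blast
  have sub: "Q \<subseteq> gcl n S A C" using cl_mem[OF CA assms(4)] assms by blast
  have "gcl n S A C \<noteq> C"
  proof
    assume "gcl n S A C = C"
    hence "card Q \<le> card C" using sub finA finite_subset CA by (metis card_mono)
    then show False using assms n1 by linarith
  qed
  then show ?thesis using sub CA assms(4) unfolding Lines_def by blast
qed

lemma in_line_d: assumes "Q \<subseteq> A" "n \<le> card Q" "dd Q \<le> int (n - 1)"
  shows "\<exists>L\<in>Lines. Q \<subseteq> L"
proof -
  have "n - 1 \<le> card Q" using assms by linarith
  then obtain C where C: "C \<subseteq> Q" "card C = n - 1" using obtain_subset_with_card_n by metis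
  have "\<forall>a\<in>Q. dd (insert a C) \<le> int (n - 1)"
    using gdim_mono[of _ Q] C assms by (meson insert_subset order_trans)
  then show ?thesis using in_line[OF assms(1,2) C] by blast
qed


abbreviation G where "G \<equiv> geo_rel n S A"

lemma finLines: "finite Lines"
proof -
  have "Lines \<subseteq> Pow A" using line_A by blast
  then show ?thesis using finA by (simp add: finite_subset)
qed

lemma G_mem: "Y \<in> G \<longleftrightarrow> Y \<subseteq> A \<and> card Y = n \<and> (\<exists>L\<in>Lines. Y \<subseteq> L)"
proof
  assume "Y \<in> G"
  then show "Y \<subseteq> A \<and> card Y = n \<and> (\<exists>L\<in>Lines. Y \<subseteq> L)"
    unfolding geo_rel_def Lines_def by blast
next
  assume a: "Y \<subseteq> A \<and> card Y = n \<and> (\<exists>L\<in>Lines. Y \<subseteq> L)"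
  then obtain C where C: "C \<subseteq> A" "card C = n - 1" "gcl n S A C \<noteq> C" "Y \<subseteq> gcl n S A C"
    unfolding Lines_def by blast
  have "finite C" "finite Y" using C a finA finite_subset by auto
  then show "Y \<in> G" unfolding geo_rel_def using a C by blast
qed

lemma Gclique_line: assumes "clique n G A Q" shows "\<exists>L\<in>Lines. Q \<subseteq> L"
proof -
  have QA: "Q \<subseteq> A" using assms unfolding clique_def by blast
  have fQ: "finite Q" using QA finA finite_subset by blast
  have cQ: "n \<le> card Q" using assms fQ unfolding clique_def by blast
  have "n - 1 \<le> card Q" using cQ by linarith
  then obtain C where C: "C \<subseteq> Q" "card C = n - 1" using obtain_subset_with_card_n by metis
  have fC: "finite C" using C fQ finite_subset by blast
  have "dd (insert a C) \<le> int (n - 1)" if aQ: "a \<in> Q" for a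
  proof (cases "a \<in> C")
    case True
    then show ?thesis using pure[of C] C QA by (simp add: insert_absorb)
  next
    case False
    have "card (insert a C) = n" using False fC C n1 by simp
    moreover have "insert a C \<subseteq> Q" using aQ C by blast
    moreover have "finite (insert a C)" using fC by simp
    moreover have "\<forall>Y. Y \<subseteq> Q \<and> finite Y \<and> card Y = n \<longrightarrow> Y \<in> G" using assms unfolding clique_def by blast
    ultimately have "insert a C \<in> G" by blast
    then obtain L where L: "L \<in> Lines" "insert a C \<subseteq> L" using G_mem by blast
    have "dd (insert a C) \<le> dd L" using gdim_mono[OF L(2) line_A[OF L(1)]] .
    then show ?thesis using line_dim[OF L(1)] by simp
  qed
  then show ?thesis using in_line[OF QA cQ C] by blast
qed

lemma line_Gclique: assumes "L \<in> Lines" shows "clique n G A L"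
proof -
  have "Y \<in> G" if "Y \<subseteq> L" "finite Y" "card Y = n" for Y
    using G_mem[of Y] that assms line_A[OF assms] by blast
  then show ?thesis unfolding clique_def using line_A[OF assms] line_card[OF assms] by blast
qed

lemma maxG: "maxcliques n G A = Lines"
proof
  show "maxcliques n G A \<subseteq> Lines"
  proof
    fix K assume K: "K \<in> maxcliques n G A"
    hence cK: "clique n G A K" and mK: "\<forall>K'. clique n G A K' \<and> K \<subseteq> K' \<longrightarrow> K' = K"
      unfolding maxcliques_def by auto
    obtain L where L: "L \<in> Lines" "K \<subseteq> L" using Gclique_line[OF cK] by blast
    have "L = K" using mK line_Gclique[OF L(1)] L(2) by blast
    then show "K \<in> Lines" using L by simp
  qed
next
  show "Lines \<subseteq> maxcliques n G A"
  proof
    fix L assume L: "L \<in> Lines"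
    have "K' = L" if K': "clique n G A K'" "L \<subseteq> K'" for K'
    proof -
      obtain L' where L': "L' \<in> Lines" "K' \<subseteq> L'" using Gclique_line[OF K'(1)] by blast
      have "n - 1 \<le> card L" using line_card[OF L] by linarith
      hence "L = L'" using line_eq2[OF L L'(1), of L] K' L' by blast
      then show ?thesis using K' L' by blast
    qed
    then show "L \<in> maxcliques n G A" unfolding maxcliques_def using line_Gclique[OF L] by blast
  qed
qed

lemma linG: "lin n G A"
proof
  show "finite A" by (rule finA)
  show "1 \<le> n" by (rule n1)
  show "is_structure n A G" unfolding is_structure_def
  proof
    fix Y assume "Y \<in> G"
    hence "Y \<subseteq> A" "card Y = n" using G_mem by auto
    then show "Y \<subseteq> A \<and> finite Y \<and> card Y = n" using finA finite_subset by blast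
  qed
  show "\<forall>K1\<in>maxcliques n G A. \<forall>K2\<in>maxcliques n G A. K1 \<noteq> K2 \<longrightarrow> card (K1 \<inter> K2) < n"
  proof (intro ballI impI)
    fix K1 K2 assume a: "K1 \<in> maxcliques n G A" "K2 \<in> maxcliques n G A" "K1 \<noteq> K2"
    show "card (K1 \<inter> K2) < n"
    proof (rule ccontr)
      assume "\<not> card (K1 \<inter> K2) < n"
      hence "n - 1 \<le> card (K1 \<inter> K2)" by linarith
      then show False using line_eq2[of K1 K2 "K1 \<inter> K2"] a maxG by blast
    qed
  qed
qed

lemma dG_formula: "X \<subseteq> A \<Longrightarrow> delta n G X = int (card X) - (\<Sum>L\<in>Lines. int (starcard n (L \<inter> X)))"
  using lin.delta_formula[OF linG] maxG by simp

lemma step: assumes X: "X \<subseteq> A" and L: "L \<in> Lines" "n \<le> card (L \<inter> X)" and a: "a \<in> L" "a \<notin> X"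
  shows "delta n G (insert a X) \<le> delta n G X"
proof -
  have aA: "a \<in> A" using a L line_A by blast
  have fX: "finite X" using X finA finite_subset by blast
  have fL: "finite L" using line_fin[OF L(1)] .
  have e: "L \<inter> insert a X = insert a (L \<inter> X)" using a by blast
  have "card (L \<inter> insert a X) = card (L \<inter> X) + 1" unfolding e using a fL by simp
  hence t1: "int (starcard n (L \<inter> insert a X)) = int (starcard n (L \<inter> X)) + 1"
    unfolding starcard_def using L(2) by simp
  have t2: "(\<Sum>L'\<in>Lines - {L}. int (starcard n (L' \<inter> X))) \<le> (\<Sum>L'\<in>Lines - {L}. int (starcard n (L' \<inter> insert a X)))"
  proof (rule sum_mono)
    fix L' assume "L' \<in> Lines - {L}"
    hence "finite L'" using line_fin by blast
    hence "card (L' \<inter> X) \<le> card (L' \<inter> insert a X)" by (intro card_mono) auto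
    then show "int (starcard n (L' \<inter> X)) \<le> int (starcard n (L' \<inter> insert a X))"
      unfolding starcard_def by simp
  qed
  have "(\<Sum>L'\<in>Lines. int (starcard n (L' \<inter> insert a X))) = int (starcard n (L \<inter> insert a X)) + (\<Sum>L'\<in>Lines - {L}. int (starcard n (L' \<inter> insert a X)))"
    using sum.remove[OF finLines L(1)] by blast
  moreover have "(\<Sum>L'\<in>Lines. int (starcard n (L' \<inter> X))) = int (starcard n (L \<inter> X)) + (\<Sum>L'\<in>Lines - {L}. int (starcard n (L' \<inter> X)))"
    using sum.remove[OF finLines L(1)] by blast
  moreover have "card (insert a X) = card X + 1" using fX a by simp
  ultimately show ?thesis using dG_formula[OF X] dG_formula[of "insert a X"] X aA t1 t2 by simp
qed

definition lclosed where "lclosed W \<longleftrightarrow> (\<forall>L\<in>Lines. n \<le> card (L \<inter> W) \<longrightarrow> L \<subseteq> W)"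

lemma closure: "X \<subseteq> A \<Longrightarrow> \<exists>W. X \<subseteq> W \<and> W \<subseteq> A \<and> delta n G W \<le> delta n G X \<and> lclosed W"
proof (induction "card (A - X)" arbitrary: X rule: less_induct)
  case (less X)
  show ?case
  proof (cases "lclosed X")
    case True then show ?thesis using less by blast
  next
    case False
    then obtain L a where La: "L \<in> Lines" "n \<le> card (L \<inter> X)" "a \<in> L" "a \<notin> X"
      unfolding lclosed_def by blast
    have aA: "a \<in> A" using La line_A by blast
    have "A - insert a X \<subset> A - X" using aA La by blast
    hence "card (A - insert a X) < card (A - X)" using finA by (meson finite_Diff psubset_card_mono)
    then obtain W where W: "insert a X \<subseteq> W" "W \<subseteq> A" "delta n G W \<le> delta n G (insert a X)" "lclosed W"
      using less(1)[of "insert a X"] less(2) aA by blast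
    have "delta n G (insert a X) \<le> delta n G X" using step[OF less(2) La] .
    hence "delta n G W \<le> delta n G X" using W(3) by linarith
    moreover have "X \<subseteq> W" using W(1) by blast
    ultimately show ?thesis using W(2,4) by blast
  qed
qed

lemma identity: assumes W: "W \<subseteq> A" "lclosed W" shows "delta n G W = dl W"
proof -
  let ?M = "maxcliques n S A"
  let ?M' = "{K \<in> ?M. n \<le> card (K \<inter> W)}"
  let ?T = "{L \<in> Lines. L \<subseteq> W}"
  define l where "l K = (SOME L. L \<in> Lines \<and> K \<inter> W \<subseteq> L)" for K
  have ex: "\<exists>L. L \<in> Lines \<and> K \<inter> W \<subseteq> L" if K: "K \<in> ?M'" for K
  proof -
    have cl: "clique n S A (K \<inter> W)" using clique_subset[OF max_clique, of K "K \<inter> W"] K by blast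
    have KWA: "K \<inter> W \<subseteq> A" using W(1) by blast
    have "dd (K \<inter> W) \<le> dl (K \<inter> W)" using gdim_le[OF order_refl KWA] .
    hence "dd (K \<inter> W) \<le> int (n - 1)" using clique_delta[OF cl] n1 by simp
    then show ?thesis using in_line_d[of "K \<inter> W"] W K by blast
  qed
  have lK: "l K \<in> Lines \<and> K \<inter> W \<subseteq> l K" if "K \<in> ?M'" for K
    unfolding l_def using someI_ex[OF ex[OF that]] .
  have lT: "l K \<in> ?T" if K: "K \<in> ?M'" for K
  proof -
    have "card (K \<inter> W) \<le> card (l K \<inter> W)" using lK[OF K] line_fin by (intro card_mono) auto
    then show ?thesis using lK[OF K] K W(2) unfolding lclosed_def by auto
  qed
  have fM': "finite ?M'" using finM by simp
  have fT: "finite ?T" using finLines by simp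
  have img: "l ` ?M' \<subseteq> ?T" using lT by blast
  have inner: "(\<Sum>K\<in>{K \<in> ?M'. l K = L}. int (starcard n (K \<inter> W))) = int (starcard n (L \<inter> W))"
    if L: "L \<in> ?T" for L
  proof -
    have LL: "L \<in> Lines" "L \<subseteq> W" using L by auto
    have seteq: "{K \<in> ?M'. l K = L} = {K \<in> ?M. n \<le> card (K \<inter> L)}"
    proof
      show "{K \<in> ?M'. l K = L} \<subseteq> {K \<in> ?M. n \<le> card (K \<inter> L)}"
      proof
        fix K assume K: "K \<in> {K \<in> ?M'. l K = L}"
        have "finite K" using K clique_fin max_clique by blast
        moreover have "K \<inter> W \<subseteq> K \<inter> L" using lK[of K] K by auto
        ultimately have "card (K \<inter> W) \<le> card (K \<inter> L)" by (intro card_mono) auto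
        then show "K \<in> {K \<in> ?M. n \<le> card (K \<inter> L)}" using K by auto
      qed
    next
      show "{K \<in> ?M. n \<le> card (K \<inter> L)} \<subseteq> {K \<in> ?M'. l K = L}"
      proof
        fix K assume K: "K \<in> {K \<in> ?M. n \<le> card (K \<inter> L)}"
        have fK: "finite K" using K clique_fin max_clique by blast
        have "K \<inter> L \<subseteq> K \<inter> W" using LL by auto
        hence "card (K \<inter> L) \<le> card (K \<inter> W)" using fK by (intro card_mono) auto
        hence KM': "K \<in> ?M'" using K by auto
        have "K \<inter> L \<subseteq> l K \<inter> L" using lK[OF KM'] LL by auto
        moreover have "n - 1 \<le> card (K \<inter> L)" using K by auto
        ultimately have "l K = L" using line_eq2[of "l K" L "K \<inter> L"] lK[OF KM'] LL by blast
        then show "K \<in> {K \<in> ?M'. l K = L}" using KM' by blast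
      qed
    qed
    have "(\<Sum>K\<in>{K \<in> ?M'. l K = L}. int (starcard n (K \<inter> W))) = (\<Sum>K\<in>{K \<in> ?M. n \<le> card (K \<inter> L)}. int (starcard n (K \<inter> L)))"
    proof (rule sum.cong[OF seteq])
      fix K assume K: "K \<in> {K \<in> ?M. n \<le> card (K \<inter> L)}"
      hence KM': "K \<in> ?M'" "l K = L" using seteq by auto
      have "K \<inter> W = K \<inter> L" using lK[OF KM'(1)] KM'(2) LL by auto
      then show "int (starcard n (K \<inter> W)) = int (starcard n (K \<inter> L))" by simp
    qed
    also have "\<dots> = (\<Sum>K\<in>?M. int (starcard n (K \<inter> L)))"
      by (rule sum.mono_neutral_left[OF finM]) (auto simp: starcard_def)
    also have "\<dots> = int (card L) - dl L" using delta_formula[OF line_A[OF LL(1)]] by simp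
    also have "\<dots> = int (starcard n (L \<inter> W))"
      using line_delta[OF LL(1)] line_card[OF LL(1)] LL n1 unfolding starcard_def
      by (simp add: Int_absorb2 of_nat_diff)
    finally show ?thesis .
  qed
  have "(\<Sum>K\<in>?M. int (starcard n (K \<inter> W))) = (\<Sum>K\<in>?M'. int (starcard n (K \<inter> W)))"
    by (rule sum.mono_neutral_right[OF finM]) (auto simp: starcard_def)
  also have "\<dots> = (\<Sum>L\<in>?T. \<Sum>K\<in>{K \<in> ?M'. l K = L}. int (starcard n (K \<inter> W)))"
    by (rule sum.group[OF fM' fT img, symmetric])
  also have "\<dots> = (\<Sum>L\<in>?T. int (starcard n (L \<inter> W)))" using inner by simp
  also have "\<dots> = (\<Sum>L\<in>Lines. int (starcard n (L \<inter> W)))"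
  proof (rule sum.mono_neutral_left[OF finLines])
    show "?T \<subseteq> Lines" by blast
    show "\<forall>i\<in>Lines - ?T. int (starcard n (i \<inter> W)) = 0"
      using W(2) unfolding lclosed_def starcard_def by fastforce
  qed
  finally show ?thesis using delta_formula[OF W(1)] dG_formula[OF W(1)] by simp
qed

lemma geo: "geometric n A G"
  unfolding geometric_def
proof (intro allI impI)
  fix X assume X: "X \<subseteq> A \<and> finite X \<and> n \<le> card X \<and> delta n G X < int n"
  obtain W where W: "X \<subseteq> W" "W \<subseteq> A" "delta n G W \<le> delta n G X" "lclosed W"
    using closure[of X] X by meson
  have "dd X \<le> dl W" using gdim_le W by blast
  hence "dd X \<le> int (n - 1)" using identity[OF W(2,4)] W(3) X n1 by simp
  then obtain L where L: "L \<in> Lines" "X \<subseteq> L" using in_line_d X by blast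
  have n1X: "n - 1 \<le> card X" using X by linarith
  show "\<exists>!K. K \<in> maxcliques n G A \<and> X \<subseteq> K"
    unfolding maxG using L line_eq2[of _ _ X] n1X by blast
qed
end

theorem mainTheorem3:
  fixes n :: nat and A :: "'a set" and S :: "'a set set"
  assumes "1 \<le> n"
    and "C_clq n A S"
    and "gpure n S A (n - 1)"
  shows "C_geo n A (geo_rel n S A)"
proof -
  have c0: "C_clq0 n A S" using assms(2) unfolding C_clq_def by blast
  have p: "\<And>C. C \<subseteq> A \<Longrightarrow> card C = n - 1 \<Longrightarrow> gdim n S A C = int (n - 1)"
    using assms(3) unfolding gpure_def gindep_def by auto
  interpret clqs n S A
    using c0 p assms(1) unfolding C_clq0_def by unfold_locales auto
  show ?thesis unfolding C_geo_def using finA lin.str[OF linG] geo by blast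
qed

end
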